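(* Let $\varepsilon>0$, $W(x)=(x^2-1)^2$, and let $u(t)$ be the solution of the graph Allen–Cahn equation $$\dot u_i=-(\Delta u)_i-\frac1\varepsilon d_i^{-r}W'(u_i)\quad(i\in V,\ t>0)$$ with arbitrary initial condition $u(0)=u_0\in\mathcal V$. Let $\mathcal S=\{u\in\mathcal V:\|u\|_{\mathcal V}^2\le\frac{17}{4}n\,d_+^r\}$. Then $t\mapsto\|u(t)\|_{\mathcal V}^2$ is strictly decreasing at every $t$ with $u(t)\notin\mathcal S$. Consequently $\mathcal S$ is positively invariant, and every trajectory enters $\mathcal S$ in finite time.
   Context: $G=(V,E)$ is a finite undirected weighted graph with $n$ nodes $V=\{1,\dots,n\}$. The weights satisfy $\omega_{ij}=\omega_{ji}\ge0$, with $\omega_{ij}>0$ iff $\{i,j\}\in E$, and $\omega_{ii}=0$. The degrees are $d_i=\sum_j\omega_{ij}>0$, and $d_+=\max_id_i$. A parameter $r\in[0,1]$ is fixed. $\mathcal V$ is the space of functions $V\to\mathbb R$ with $\langle u,v\rangle_{\mathcal V}=\sum_iu_iv_id_i^r$ and $\|u\|_{\mathcal V}=\sqrt{\langle u,u\rangle_{\mathcal V}}$. The graph Laplacian is $(\Delta u)_i=d_i^{-r}\sum_j\omega_{ij}(u_i-u_j)$. *)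

theory Defs
  imports "HOL-Analysis.Analysis"
begin

definition degree :: "('a::finite \<Rightarrow> 'a \<Rightarrow> real) \<Rightarrow> 'a \<Rightarrow> real" where
  "degree w i = (\<Sum>j\<in>UNIV. w i j)"

definition max_degree :: "('a::finite \<Rightarrow> 'a \<Rightarrow> real) \<Rightarrow> real" where
  "max_degree w = Max (range (degree w))"

definition vinner :: "('a::finite \<Rightarrow> 'a \<Rightarrow> real) \<Rightarrow> real \<Rightarrow> ('a \<Rightarrow> real) \<Rightarrow> ('a \<Rightarrow> real) \<Rightarrow> real" where
  "vinner w r u v = (\<Sum>i\<in>UNIV. u i * v i * degree w i powr r)"

definition vnorm :: "('a::finite \<Rightarrow> 'a \<Rightarrow> real) \<Rightarrow> real \<Rightarrow> ('a \<Rightarrow> real) \<Rightarrow> real" where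
  "vnorm w r u = sqrt (vinner w r u u)"

definition graph_laplacian :: "('a::finite \<Rightarrow> 'a \<Rightarrow> real) \<Rightarrow> real \<Rightarrow> ('a \<Rightarrow> real) \<Rightarrow> 'a \<Rightarrow> real" where
  "graph_laplacian w r u i = degree w i powr (- r) * (\<Sum>j\<in>UNIV. w i j * (u i - u j))"

definition dw_potential :: "real \<Rightarrow> real" where
  "dw_potential x = (x\<^sup>2 - 1)\<^sup>2"

definition absorbing_set :: "('a::finite \<Rightarrow> 'a \<Rightarrow> real) \<Rightarrow> real \<Rightarrow> ('a \<Rightarrow> real) set" where
  "absorbing_set w r = {u. (vnorm w r u)\<^sup>2 \<le> 17 / 4 * real CARD('a) * max_degree w powr r}"

definition strictly_decreasing_at :: "(real \<Rightarrow> real) \<Rightarrow> real \<Rightarrow> bool" where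
  "strictly_decreasing_at f t \<longleftrightarrow>
     (\<exists>\<delta>>0. (\<forall>s. t < s \<and> s < t + \<delta> \<longrightarrow> f s < f t) \<and>
             (\<forall>s. t - \<delta> < s \<and> s < t \<longrightarrow> f t < f s))"

end

theory Submission
  imports Defs
begin

lemma dw_deriv: "deriv dw_potential x = 4*x*(x^2-1)"
proof -
  have "((\<lambda>x. (x^2-1)^2) has_real_derivative 4*x*(x^2-1)) (at x)"
    by (auto intro!: derivative_eq_intros simp: algebra_simps)
  then have "(dw_potential has_real_derivative 4*x*(x^2-1)) (at x)"
    unfolding dw_potential_def[abs_def] by (simp add: algebra_simps)
  then show ?thesis by (rule DERIV_imp_deriv)
qed

lemma lap_nonneg:
  fixes w :: "'a::finite \<Rightarrow> 'a \<Rightarrow> real"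
  assumes sym: "\<And>i j. w i j = w j i" and nn: "\<And>i j. w i j \<ge> 0"
  shows "(\<Sum>i\<in>UNIV. v i * (\<Sum>j\<in>UNIV. w i j * (v i - v j))) \<ge> 0"
proof -
  let ?S = "\<Sum>i\<in>UNIV. v i * (\<Sum>j\<in>UNIV. w i j * (v i - v j))"
  have 1: "?S = (\<Sum>i\<in>UNIV. \<Sum>j\<in>UNIV. w i j * v i * (v i - v j))"
    by (simp add: sum_distrib_left algebra_simps)
  have 2: "?S = (\<Sum>i\<in>UNIV. \<Sum>j\<in>UNIV. w i j * v j * (v j - v i))"
    unfolding 1 by (subst sum.swap) (simp add: sym)
  have "2 * ?S = (\<Sum>i\<in>UNIV. \<Sum>j\<in>UNIV. w i j * v i * (v i - v j) + w i j * v j * (v j - v i))"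
    using 1 2 by (simp add: sum.distrib)
  also have "\<dots> = (\<Sum>i\<in>UNIV. \<Sum>j\<in>UNIV. w i j * (v i - v j)^2)"
    by (simp add: power2_eq_square algebra_simps)
  also have "\<dots> \<ge> 0" by (intro sum_nonneg mult_nonneg_nonneg nn) auto
  finally show ?thesis by simp
qed

theorem mainTheorem16:
  fixes w :: "'a::finite \<Rightarrow> 'a \<Rightarrow> real"
    and r \<epsilon> :: real
    and u :: "real \<Rightarrow> 'a \<Rightarrow> real"
    and u0 :: "'a \<Rightarrow> real"
  assumes w_sym: "\<And>i j. w i j = w j i"
    and w_nonneg: "\<And>i j. w i j \<ge> 0"
    and w_diag: "\<And>i. w i i = 0"
    and deg_pos: "\<And>i. degree w i > 0"
    and r: "0 \<le> r" "r \<le> 1"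
    and eps: "\<epsilon> > 0"
    and init: "u 0 = u0"
    and cont: "\<And>i. continuous_on {0..} (\<lambda>t. u t i)"
    and ode: "\<And>t i. t > 0 \<Longrightarrow>
       ((\<lambda>s. u s i) has_real_derivative
          (- graph_laplacian w r (u t) i
           - (1 / \<epsilon>) * degree w i powr (- r) * deriv dw_potential (u t i))) (at t)"
  shows "(\<forall>t>0. u t \<notin> absorbing_set w r \<longrightarrow>
            strictly_decreasing_at (\<lambda>s. (vnorm w r (u s))\<^sup>2) t)
       \<and> (\<forall>t0\<ge>0. u t0 \<in> absorbing_set w r \<longrightarrow> (\<forall>t\<ge>t0. u t \<in> absorbing_set w r))
       \<and> (\<exists>T\<ge>0. u T \<in> absorbing_set w r)"
proof -
  define E where "E s = vinner w r (u s) (u s)" for s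
  define c where "c = 17/4 * real CARD('a) * max_degree w powr r"
  define L where "L t i = (\<Sum>j\<in>UNIV. w i j * (u t i - u t j))" for t i
  define D where "D t = (\<Sum>i\<in>UNIV. 2 * u t i * (- graph_laplacian w r (u t) i
           - (1 / \<epsilon>) * degree w i powr (- r) * deriv dw_potential (u t i)) * degree w i powr r)" for t
  have vn: "(vnorm w r v)^2 = vinner w r v v" for v
    unfolding vnorm_def vinner_def
    by (intro real_sqrt_pow2 sum_nonneg) (auto simp: mult_nonneg_nonneg)
  have Enn: "E s \<ge> 0" for s
    unfolding E_def vinner_def by (intro sum_nonneg) (auto simp: mult_nonneg_nonneg)
  have S_iff: "u s \<in> absorbing_set w r \<longleftrightarrow> E s \<le> c" for s
    unfolding absorbing_set_def c_def E_def vn by simp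
  have fE: "(\<lambda>s. (vnorm w r (u s))\<^sup>2) = E" unfolding E_def vn by simp
  have E_deriv: "(E has_real_derivative D t) (at t)" if "t > 0" for t
  proof -
    have "((\<lambda>s. \<Sum>i\<in>UNIV. u s i * u s i * degree w i powr r) has_real_derivative D t) (at t)"
      unfolding D_def
      apply (rule DERIV_sum)
      apply (rule derivative_eq_intros ode[OF that] refl)+
      apply (simp add: algebra_simps)
      done
    then show ?thesis unfolding E_def vinner_def by simp
  qed
  have E_cont: "continuous_on {0..} E"
    unfolding E_def vinner_def
    by (intro continuous_intros cont)
  have dmax: "degree w i \<le> max_degree w" for i
    unfolding max_degree_def by (rule Max_ge) auto
  have dmaxpos: "max_degree w > 0" using dmax[of undefined] deg_pos[of undefined] by linarith
  have D_bound: "D t \<le> - 8 / \<epsilon>" if "t > 0" "E t > c" for t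
  proof -
    let ?q = "\<Sum>i\<in>UNIV. (u t i)^2"
    let ?n = "real CARD('a)"
    have eachD: "2 * u t i * (- graph_laplacian w r (u t) i
           - (1 / \<epsilon>) * degree w i powr (- r) * deriv dw_potential (u t i)) * degree w i powr r
          = - 2 * (u t i * L t i) - 8 / \<epsilon> * ((u t i)^4 - (u t i)^2)" for i
    proof -
      have p: "degree w i powr (- r) * degree w i powr r = 1"
        using deg_pos[of i] by (simp add: powr_minus)
      show ?thesis
        unfolding graph_laplacian_def L_def[symmetric] dw_deriv
        using p eps by (simp add: field_simps power2_eq_square power4_eq_xxxx)
          (metis (no_types, opaque_lifting) mult.commute mult.left_commute)?
    qed
    have "D t = - 2 * (\<Sum>i\<in>UNIV. u t i * L t i) - 8 / \<epsilon> * (\<Sum>i\<in>UNIV. (u t i)^4 - (u t i)^2)"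
      unfolding D_def eachD by (simp add: sum.distrib sum_subtractf sum_distrib_left sum_divide_distrib[symmetric] diff_divide_distrib)
    moreover have "(\<Sum>i\<in>UNIV. u t i * L t i) \<ge> 0"
      unfolding L_def by (rule lap_nonneg[OF w_sym w_nonneg])
    moreover have B: "(\<Sum>i\<in>UNIV. (u t i)^4 - (u t i)^2) \<ge> 1"
    proof -
      have "c < E t" by fact
      also have "E t \<le> (\<Sum>i\<in>UNIV. (u t i)^2 * max_degree w powr r)"
        unfolding E_def vinner_def
        by (intro sum_mono mult_left_mono powr_mono2)
          (auto simp: power2_eq_square r dmax less_imp_le[OF deg_pos] intro!: mult_left_mono powr_mono2)
      also have "\<dots> = max_degree w powr r * ?q" by (simp add: sum_distrib_left mult.commute)
      finally have "17/4 * ?n * max_degree w powr r < ?q * max_degree w powr r"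
        unfolding c_def by (simp add: mult.commute)
      then have q: "17/4 * ?n < ?q" using dmaxpos by simp
      have "(\<Sum>i\<in>UNIV. 2 * (u t i)^2 - 9/4) \<le> (\<Sum>i\<in>UNIV. (u t i)^4 - (u t i)^2)"
      proof (intro sum_mono)
        fix i
        have "0 \<le> ((u t i)^2 - 3/2)^2" by simp
        then show "2 * (u t i)^2 - 9/4 \<le> (u t i)^4 - (u t i)^2"
          by (simp add: power2_eq_square power4_eq_xxxx algebra_simps)
      qed
      moreover have "(\<Sum>i\<in>UNIV. 2 * (u t i)^2 - 9/4) = 2 * ?q - 9/4 * ?n"
        by (simp add: sum_subtractf sum_distrib_left)
      moreover have "?n \<ge> 1" by (simp add: Suc_le_eq)
      ultimately show ?thesis using q by linarith
    qed
    moreover have "8 / \<epsilon> * 1 \<le> 8 / \<epsilon> * (\<Sum>i\<in>UNIV. (u t i)^4 - (u t i)^2)"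
      using B eps by (intro mult_left_mono) auto
    ultimately show ?thesis by linarith
  qed
  have decr: "E b \<le> E a - 8 / \<epsilon> * (b - a)"
    if ab: "0 \<le> a" "a < b" and out: "\<And>z. a < z \<Longrightarrow> z < b \<Longrightarrow> E z > c" for a b
  proof -
    have "continuous_on {a..b} E" using E_cont ab by (elim continuous_on_subset) auto
    moreover have "E differentiable (at x)" if "a < x" "x < b" for x
      using E_deriv[of x] that ab real_differentiable_def by auto
    ultimately obtain l z where z: "a < z" "z < b" "DERIV E z :> l" "E b - E a = (b - a) * l"
      using MVT[OF ab(2)] by blast
    have "l = D z" using DERIV_unique[OF z(3) E_deriv[of z]] z ab by auto
    then have "l \<le> - 8 / \<epsilon>" using D_bound[of z] z ab out by auto
    then have "(b - a) * l \<le> (b - a) * (- 8 / \<epsilon>)" using ab by (intro mult_left_mono) auto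
    then show ?thesis using z by (simp add: algebra_simps)
  qed
  have P1: "\<forall>t>0. u t \<notin> absorbing_set w r \<longrightarrow>
            strictly_decreasing_at (\<lambda>s. (vnorm w r (u s))\<^sup>2) t"
  proof (intro allI impI)
    fix t :: real assume t: "t > 0" "u t \<notin> absorbing_set w r"
    have "8 / \<epsilon> > 0" using eps by simp
    then have Dn: "D t < 0" using D_bound[of t] S_iff[of t] t by linarith
    obtain d1 where d1: "d1 > 0" "\<forall>h>0. h < d1 \<longrightarrow> E t > E (t + h)"
      using DERIV_neg_dec_right[OF E_deriv[OF t(1)] Dn] by blast
    obtain d2 where d2: "d2 > 0" "\<forall>h>0. h < d2 \<longrightarrow> E t < E (t - h)"
      using DERIV_neg_dec_left[OF E_deriv[OF t(1)] Dn] by blast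
    show "strictly_decreasing_at (\<lambda>s. (vnorm w r (u s))\<^sup>2) t"
      unfolding fE strictly_decreasing_at_def
    proof (intro exI[of _ "min d1 d2"] conjI allI impI)
      show "min d1 d2 > 0" using d1 d2 by simp
    next
      fix s assume "t < s \<and> s < t + min d1 d2"
      then show "E s < E t" using d1(2)[rule_format, of "s - t"] by auto
    next
      fix s assume "t - min d1 d2 < s \<and> s < t"
      then show "E t < E s" using d2(2)[rule_format, of "t - s"] by auto
    qed
  qed
  have P2: "\<forall>t0\<ge>0. u t0 \<in> absorbing_set w r \<longrightarrow> (\<forall>t\<ge>t0. u t \<in> absorbing_set w r)"
  proof (intro allI impI)
    fix t0 t :: real assume t0: "t0 \<ge> 0" "u t0 \<in> absorbing_set w r" and tt: "t \<ge> t0"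
    show "u t \<in> absorbing_set w r"
    proof (rule ccontr)
      assume "u t \<notin> absorbing_set w r"
      then have Et: "E t > c" using S_iff by auto
      let ?K = "{x\<in>{t0..t}. E x \<le> c}"
      have "closed ?K"
        by (rule continuous_on_closed_Collect_le)
          (use E_cont t0 in \<open>auto intro: continuous_on_subset continuous_intros\<close>)
      then have "compact ?K" by (auto simp: compact_eq_bounded_closed intro: bounded_subset[OF bounded_closed_interval])
      moreover have "t0 \<in> ?K" using t0 tt S_iff by auto
      ultimately obtain s where s: "s \<in> ?K" "\<forall>y\<in>?K. y \<le> s"
        using compact_attains_sup[of ?K] by blast
      have st: "s < t" using s Et by (cases "s = t") auto
      have "E z > c" if "s < z" "z < t" for z
        using s(2)[rule_format, of z] that s(1) by force
      then have "E t \<le> E s - 8 / \<epsilon> * (t - s)" using decr[of s t] s t0 st by auto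
      moreover have "8 / \<epsilon> * (t - s) > 0" using eps st by simp
      ultimately show False using s Et by auto
    qed
  qed
  have P3: "\<exists>T\<ge>0. u T \<in> absorbing_set w r"
  proof (rule ccontr)
    assume "\<not> ?thesis"
    then have out: "\<And>T. T \<ge> 0 \<Longrightarrow> E T > c" using S_iff by force
    define b where "b = \<epsilon> * E 0 / 8 + 1"
    have b: "b > 0" using eps Enn[of 0] unfolding b_def
      by (metis add_nonneg_pos divide_nonneg_pos less_le mult_nonneg_nonneg zero_less_numeral zero_less_one)
    have "E b \<le> E 0 - 8 / \<epsilon> * (b - 0)" using decr[of 0 b] b out by auto
    also have "\<dots> = - 8 / \<epsilon>" unfolding b_def using eps by (simp add: field_simps)
    finally have "E b \<le> - 8 / \<epsilon>" .
    moreover have "8 / \<epsilon> > 0" using eps by simp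
    ultimately show False using Enn[of b] by linarith
  qed
  show ?thesis using P1 P2 P3 by blast
qed

end
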